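(* Let $g:\mathbb{R}^m\to\mathbb{R}$ be $\gamma_z$-strongly convex for some $\gamma_z\geq0$, and let $\mathcal{D}(\cdot)$ be a location-scale family on a convex set $\Theta\subseteq\mathbb{R}^d$, $z_\theta\sim\mathcal{D}(\theta)\iff z_\theta\overset{d}{=}(\Sigma_0+\Sigma(\theta))z_0+\mu_0+\mu\theta$. Then for all $\theta,\theta'\in\Theta$ and $\alpha\in(0,1)$, $$\mathbb{E}_{z\sim\mathcal{D}(\alpha\theta+(1-\alpha)\theta')}[g(z)]\leq\mathbb{E}_{z\sim\alpha\mathcal{D}(\theta)+(1-\alpha)\mathcal{D}(\theta')}[g(z)]-\frac{\alpha(1-\alpha)\gamma_z}{2}\mathbb{E}_{z_0\sim\mathcal{D}_0}\|\Sigma(\theta-\theta')z_0+\mu(\theta-\theta')\|_2^2.$$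
   Context: Location-scale family: $z_0\sim\mathcal{D}_0$ is drawn from a fixed zero-mean distribution $\mathcal{D}_0$ on $\mathbb{R}^m$, $\Sigma_0\in\mathbb{R}^{m\times m}$, $\mu_0\in\mathbb{R}^m$ fixed, $\mu:\mathbb{R}^d\to\mathbb{R}^m$ and $\Sigma:\mathbb{R}^d\to\mathbb{R}^{m\times m}$ linear maps. $g$ is $\gamma_z$-strongly convex if $g(z)-\frac{\gamma_z}{2}\|z\|_2^2$ is convex. $\alpha\mathcal{D}(\theta)+(1-\alpha)\mathcal{D}(\theta')$ denotes the mixture distribution. *)

theory Defs
  imports "HOL-Probability.Probability"
begin

definition strongly_convex :: "real \<Rightarrow> ('a::real_normed_vector \<Rightarrow> real) \<Rightarrow> bool" where
  "strongly_convex \<gamma> g \<longleftrightarrow> convex_on UNIV (\<lambda>z. g z - \<gamma> / 2 * (norm z)\<^sup>2)"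

definition loc_scale ::
  "(real^'m) measure \<Rightarrow> real^'m^'m \<Rightarrow> (real^'d \<Rightarrow> real^'m^'m) \<Rightarrow> real^'m
     \<Rightarrow> (real^'d \<Rightarrow> real^'m) \<Rightarrow> real^'d \<Rightarrow> (real^'m) measure" where
  "loc_scale D0 \<Sigma>0 \<Sigma> \<mu>0 \<mu> \<theta> =
     distr D0 borel (\<lambda>z. (\<Sigma>0 + \<Sigma> \<theta>) *v z + \<mu>0 + \<mu> \<theta>)"

definition mixture :: "real \<Rightarrow> 'a measure \<Rightarrow> 'a measure \<Rightarrow> 'a measure" where
  "mixture \<alpha> M N = measure_of (space M) (sets M)
      (\<lambda>A. ennreal \<alpha> * emeasure M A + ennreal (1 - \<alpha>) * emeasure N A)"

end

theory Submission
  imports Defs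
begin
lemma mixture_bind:
  assumes M: "prob_space M" and N: "prob_space N" and S: "sets N = sets M"
    and a: "0 \<le> a" "a \<le> 1"
  shows "mixture a M N = measure_pmf (bernoulli_pmf a) \<bind> (\<lambda>b. if b then M else N)"
    (is "_ = ?B")
proof -
  have meas: "(\<lambda>b. if b then M else N) \<in> measurable (measure_pmf (bernoulli_pmf a)) (subprob_algebra M)"
    using M N S by (auto simp: measurable_def space_subprob_algebra prob_space_imp_subprob_space)
  have sB: "sets ?B = sets M"
    by (rule sets_bind) (use S in auto)
  have spB: "space ?B = space M"
    using sets_eq_imp_space_eq[OF sB] .
  have em: "emeasure ?B A = ennreal a * emeasure M A + ennreal (1 - a) * emeasure N A" if A: "A \<in> sets M" for A
  proof -
    have "emeasure ?B A = (\<integral>\<^sup>+b. emeasure (if b then M else N) A \<partial>measure_pmf (bernoulli_pmf a))"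
      by (rule emeasure_bind[OF _ meas A]) simp
    also have "\<dots> = ennreal a * emeasure M A + ennreal (1 - a) * emeasure N A"
      using a by (subst nn_integral_measure_pmf_support[of UNIV]) (auto simp: UNIV_bool mult.commute)
    finally show ?thesis .
  qed
  have "mixture a M N = measure_of (space ?B) (sets ?B) (emeasure ?B)"
    unfolding mixture_def spB sB
    by (rule measure_of_eq) (auto simp: em sets.space_closed sets.sigma_sets_eq)
  also have "\<dots> = ?B" by (rule measure_of_of_measure)
  finally show ?thesis .
qed

lemma mixture_nn:
  assumes M: "prob_space M" and N: "prob_space N" and S: "sets N = sets M"
    and a: "0 \<le> a" "a \<le> 1" and h: "h \<in> borel_measurable M"
  shows "(\<integral>\<^sup>+x. h x \<partial>mixture a M N) = ennreal a * (\<integral>\<^sup>+x. h x \<partial>M) + ennreal (1 - a) * (\<integral>\<^sup>+x. h x \<partial>N)"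
proof -
  have meas: "(\<lambda>b. if b then M else N) \<in> measurable (measure_pmf (bernoulli_pmf a)) (subprob_algebra M)"
    using M N S by (auto simp: measurable_def space_subprob_algebra prob_space_imp_subprob_space)
  show ?thesis
    unfolding mixture_bind[OF M N S a]
    using a by (subst nn_integral_bind[OF h meas], subst nn_integral_measure_pmf_support[of UNIV])
       (auto simp: UNIV_bool mult.commute)
qed

lemma mixture_sets:
  assumes M: "prob_space M" and N: "prob_space N" and S: "sets N = sets M"
    and a: "0 \<le> a" "a \<le> 1"
  shows "sets (mixture a M N) = sets M"
  unfolding mixture_bind[OF M N S a] by (rule sets_bind) (use S in auto)

lemma mixture_integral:
  fixes f :: "'a \<Rightarrow> real"
  assumes M: "prob_space M" and N: "prob_space N" and S: "sets N = sets M"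
    and a: "0 \<le> a" "a \<le> 1" and fM: "integrable M f" and fN: "integrable N f"
  shows "integrable (mixture a M N) f"
    and "(\<integral>x. f x \<partial>mixture a M N) = a * (\<integral>x. f x \<partial>M) + (1 - a) * (\<integral>x. f x \<partial>N)"
proof -
  have fm: "f \<in> borel_measurable M" using fM by auto
  have fm': "f \<in> borel_measurable (mixture a M N)"
    using fm measurable_cong_sets[OF mixture_sets[OF M N S a] refl] by blast
  have nM: "(\<integral>\<^sup>+x. norm (f x) \<partial>M) < \<infinity>" using fM integrable_iff_bounded by blast
  have nN: "(\<integral>\<^sup>+x. norm (f x) \<partial>N) < \<infinity>" using fN integrable_iff_bounded by blast
  have "(\<integral>\<^sup>+x. norm (f x) \<partial>mixture a M N) < \<infinity>"
    using nM nN by (subst mixture_nn[OF M N S a]) (auto simp: ennreal_mult_less_top intro: borel_measurable_abs fm)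
  then show I: "integrable (mixture a M N) f" using fm' integrable_iff_bounded by blast
  have P: "(\<integral>\<^sup>+x. ennreal (f x) \<partial>mixture a M N) = ennreal a * (\<integral>\<^sup>+x. ennreal (f x) \<partial>M) + ennreal (1 - a) * (\<integral>\<^sup>+x. ennreal (f x) \<partial>N)"
    by (rule mixture_nn[OF M N S a]) (use fm in auto)
  have Q: "(\<integral>\<^sup>+x. ennreal (- f x) \<partial>mixture a M N) = ennreal a * (\<integral>\<^sup>+x. ennreal (- f x) \<partial>M) + ennreal (1 - a) * (\<integral>\<^sup>+x. ennreal (- f x) \<partial>N)"
    by (rule mixture_nn[OF M N S a]) (use fm in auto)
  have fin: "(\<integral>\<^sup>+x. ennreal (f x) \<partial>K) < \<infinity>" "(\<integral>\<^sup>+x. ennreal (- f x) \<partial>K) < \<infinity>"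
    if "integrable K f" for K
    using that by (simp_all add: real_integrable_def top.not_eq_extremum)
  show "(\<integral>x. f x \<partial>mixture a M N) = a * (\<integral>x. f x \<partial>M) + (1 - a) * (\<integral>x. f x \<partial>N)"
    unfolding real_lebesgue_integral_def[OF I] real_lebesgue_integral_def[OF fM] real_lebesgue_integral_def[OF fN] P Q
    using fin[OF fM] fin[OF fN] a
    by (simp add: enn2real_plus ennreal_mult_less_top enn2real_mult algebra_simps)
qed

lemma norm_mix_identity:
  fixes x y :: "'a::real_inner"
  shows "a * (norm x)\<^sup>2 + (1 - a) * (norm y)\<^sup>2 - (norm (a *\<^sub>R x + (1 - a) *\<^sub>R y))\<^sup>2
         = a * (1 - a) * (norm (x - y))\<^sup>2"
  unfolding power2_norm_eq_inner
  by (simp add: inner_add_left inner_add_right inner_diff_left inner_diff_right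
      inner_commute algebra_simps)

lemma sc_ineq:
  fixes g :: "'a::real_inner \<Rightarrow> real"
  assumes "strongly_convex \<gamma> g" "0 \<le> a" "a \<le> 1"
  shows "g (a *\<^sub>R x + (1 - a) *\<^sub>R y) \<le> a * g x + (1 - a) * g y - a * (1 - a) * \<gamma> / 2 * (norm (x - y))\<^sup>2"
proof -
  let ?m = "a *\<^sub>R x + (1 - a) *\<^sub>R y"
  have "convex_on UNIV (\<lambda>z. g z - \<gamma> / 2 * (norm z)\<^sup>2)" using assms(1) unfolding strongly_convex_def .
  from convex_onD[OF this, of "1 - a" x y] assms(2,3)
  have H: "g ?m - \<gamma> / 2 * (norm ?m)\<^sup>2
      \<le> a * (g x - \<gamma> / 2 * (norm x)\<^sup>2) + (1 - a) * (g y - \<gamma> / 2 * (norm y)\<^sup>2)" by simp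
  have "g ?m \<le> a * g x + (1 - a) * g y - \<gamma> / 2 * (a * (norm x)\<^sup>2 + (1 - a) * (norm y)\<^sup>2 - (norm ?m)\<^sup>2)"
  proof -
    have "a * g x + (1 - a) * g y - \<gamma> / 2 * (a * (norm x)\<^sup>2 + (1 - a) * (norm y)\<^sup>2 - (norm ?m)\<^sup>2)
      = a * (g x - \<gamma> / 2 * (norm x)\<^sup>2) + (1 - a) * (g y - \<gamma> / 2 * (norm y)\<^sup>2) + \<gamma> / 2 * (norm ?m)\<^sup>2"
      by (simp add: field_simps)
    then show ?thesis using H by linarith
  qed
  also have "\<dots> = a * g x + (1 - a) * g y - \<gamma> / 2 * (a * (1 - a) * (norm (x - y))\<^sup>2)"
    by (simp only: norm_mix_identity)
  finally have F: "g ?m \<le> a * g x + (1 - a) * g y - \<gamma> / 2 * (a * (1 - a) * (norm (x - y))\<^sup>2)" .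
  have "\<gamma> / 2 * (a * (1 - a) * (norm (x - y))\<^sup>2) = a * (1 - a) * \<gamma> / 2 * (norm (x - y))\<^sup>2"
    by simp
  then show ?thesis using F by linarith
qed

theorem propositionA2:
  fixes g :: "real^'m \<Rightarrow> real" and \<gamma>z :: real
    and D0 :: "(real^'m) measure"
    and \<Sigma>0 :: "real^'m^'m" and \<Sigma> :: "real^'d \<Rightarrow> real^'m^'m"
    and \<mu>0 :: "real^'m" and \<mu> :: "real^'d \<Rightarrow> real^'m"
    and \<Theta> :: "(real^'d) set" and \<theta> \<theta>' :: "real^'d" and \<alpha> :: real
  assumes "\<gamma>z \<ge> 0" and "strongly_convex \<gamma>z g"
    and "prob_space D0" and "sets D0 = sets borel"
    and "integrable D0 (\<lambda>z. z)" and "(\<integral>z. z \<partial>D0) = 0"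
    and "linear \<Sigma>" and "linear \<mu>"
    and "convex \<Theta>" and "\<theta> \<in> \<Theta>" and "\<theta>' \<in> \<Theta>"
    and "0 < \<alpha>" and "\<alpha> < 1"
    and "integrable D0 (\<lambda>z. (norm z)\<^sup>2)"
    and "integrable (loc_scale D0 \<Sigma>0 \<Sigma> \<mu>0 \<mu> \<theta>) g"
    and "integrable (loc_scale D0 \<Sigma>0 \<Sigma> \<mu>0 \<mu> \<theta>') g"
    and "integrable (loc_scale D0 \<Sigma>0 \<Sigma> \<mu>0 \<mu> (\<alpha> *\<^sub>R \<theta> + (1 - \<alpha>) *\<^sub>R \<theta>')) g"
  shows "(\<integral>z. g z \<partial>(loc_scale D0 \<Sigma>0 \<Sigma> \<mu>0 \<mu> (\<alpha> *\<^sub>R \<theta> + (1 - \<alpha>) *\<^sub>R \<theta>')))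
     \<le> (\<integral>z. g z \<partial>(mixture \<alpha> (loc_scale D0 \<Sigma>0 \<Sigma> \<mu>0 \<mu> \<theta>) (loc_scale D0 \<Sigma>0 \<Sigma> \<mu>0 \<mu> \<theta>')))
        - \<alpha> * (1 - \<alpha>) * \<gamma>z / 2
          * (\<integral>z0. (norm (\<Sigma> (\<theta> - \<theta>') *v z0 + \<mu> (\<theta> - \<theta>')))\<^sup>2 \<partial>D0)"
  proof -
  note lin = assms(7,8)
  define T where "T t z = (\<Sigma>0 + \<Sigma> t) *v z + \<mu>0 + \<mu> t" for t z
  define m where "m = \<alpha> *\<^sub>R \<theta> + (1 - \<alpha>) *\<^sub>R \<theta>'"
  have LS: "loc_scale D0 \<Sigma>0 \<Sigma> \<mu>0 \<mu> t = distr D0 borel (T t)" for t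
    unfolding loc_scale_def T_def ..
  have Tcont: "continuous_on UNIV (T t)" for t
    unfolding T_def
    by (intro continuous_intros linear_continuous_on linear_linear[THEN iffD1] matrix_vector_mul_linear)
  have Tm: "T t \<in> borel_measurable D0" for t
    using borel_measurable_continuous_onI[OF Tcont] measurable_cong_sets[OF assms(4) refl] by blast
  have gm: "g \<in> borel_measurable borel"
    using borel_measurable_integrable[OF assms(15)] unfolding LS
    by (simp add: measurable_cong_sets[OF sets_distr refl])
  have Ig: "integrable D0 (\<lambda>z. g (T t z))" if "integrable (loc_scale D0 \<Sigma>0 \<Sigma> \<mu>0 \<mu> t) g" for t
    using that unfolding LS by (subst (asm) integrable_distr_eq[OF Tm gm]) 
  have EQ: "(\<integral>z. g z \<partial>loc_scale D0 \<Sigma>0 \<Sigma> \<mu>0 \<mu> t) = (\<integral>z. g (T t z) \<partial>D0)" for t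
    unfolding LS by (rule integral_distr[OF Tm gm])
  have Tmid: "T m z = \<alpha> *\<^sub>R T \<theta> z + (1 - \<alpha>) *\<^sub>R T \<theta>' z" for z
    unfolding T_def m_def using lin
    unfolding linear_add[OF lin(1)] linear_add[OF lin(2)] linear_cmul[OF lin(1)] linear_cmul[OF lin(2)]
    by (simp add: matrix_vector_mult_add_rdistrib scaleR_matrix_vector_assoc algebra_simps)
  have Tdiff: "T \<theta> z - T \<theta>' z = \<Sigma> (\<theta> - \<theta>') *v z + \<mu> (\<theta> - \<theta>')" for z
    unfolding T_def using lin
    by (simp add: linear_diff[OF lin(1)] linear_diff[OF lin(2)] matrix_vector_mult_add_rdistrib matrix_vector_mult_diff_rdistrib algebra_simps)
  define c where "c = \<alpha> * (1 - \<alpha>) * \<gamma>z / 2"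
  have c0: "c \<ge> 0" unfolding c_def using assms(1,12,13) by simp
  define F where "F z = \<alpha> * g (T \<theta> z) + (1 - \<alpha>) * g (T \<theta>' z) - g (T m z)" for z
  define Q where "Q z = c * (norm (\<Sigma> (\<theta> - \<theta>') *v z + \<mu> (\<theta> - \<theta>')))\<^sup>2" for z
  have QF: "Q z \<le> F z" for z
    using sc_ineq[OF assms(2), of \<alpha> "T \<theta> z" "T \<theta>' z"] assms(12,13)
    unfolding Q_def F_def c_def Tmid Tdiff by simp
  have IF: "integrable D0 F"
    unfolding F_def using Ig[OF assms(15)] Ig[OF assms(16)] Ig[OF assms(17)[folded m_def]] by auto
  have Qm: "Q \<in> borel_measurable D0"
  proof -
    have "continuous_on UNIV Q" unfolding Q_def
      by (intro continuous_intros linear_continuous_on linear_linear[THEN iffD1] matrix_vector_mul_linear)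
    then show ?thesis
      using borel_measurable_continuous_onI measurable_cong_sets[OF assms(4) refl] by blast
  qed
  have IQ: "integrable D0 Q"
  proof (rule Bochner_Integration.integrable_bound[OF IF Qm], rule AE_I2)
    fix z
    have "0 \<le> Q z" unfolding Q_def using c0 by simp
    then show "norm (Q z) \<le> norm (F z)" using QF[of z] by simp
  qed
  have "(\<integral>z. Q z \<partial>D0) \<le> (\<integral>z. F z \<partial>D0)" by (rule integral_mono[OF IQ IF QF])
  also have "\<dots> = \<alpha> * (\<integral>z. g (T \<theta> z) \<partial>D0) + (1 - \<alpha>) * (\<integral>z. g (T \<theta>' z) \<partial>D0) - (\<integral>z. g (T m z) \<partial>D0)"
    unfolding F_def using Ig[OF assms(15)] Ig[OF assms(16)] Ig[OF assms(17)[folded m_def]] by simp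
  finally have main: "(\<integral>z. g (T m z) \<partial>D0) \<le> \<alpha> * (\<integral>z. g (T \<theta> z) \<partial>D0) + (1 - \<alpha>) * (\<integral>z. g (T \<theta>' z) \<partial>D0) - c * (\<integral>z0. (norm (\<Sigma> (\<theta> - \<theta>') *v z0 + \<mu> (\<theta> - \<theta>')))\<^sup>2 \<partial>D0)"
    unfolding Q_def by simp
  have PS: "prob_space (loc_scale D0 \<Sigma>0 \<Sigma> \<mu>0 \<mu> t)" for t
    unfolding LS by (rule prob_space.prob_space_distr[OF assms(3) Tm])
  have mix: "(\<integral>z. g z \<partial>(mixture \<alpha> (loc_scale D0 \<Sigma>0 \<Sigma> \<mu>0 \<mu> \<theta>) (loc_scale D0 \<Sigma>0 \<Sigma> \<mu>0 \<mu> \<theta>')))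
     = \<alpha> * (\<integral>z. g z \<partial>loc_scale D0 \<Sigma>0 \<Sigma> \<mu>0 \<mu> \<theta>) + (1 - \<alpha>) * (\<integral>z. g z \<partial>loc_scale D0 \<Sigma>0 \<Sigma> \<mu>0 \<mu> \<theta>')"
    by (rule mixture_integral(2)[OF PS PS _ _ _ assms(15,16)]) (use assms(12,13) in \<open>auto simp: LS\<close>)
  show ?thesis
    unfolding mix EQ m_def[symmetric] using main unfolding c_def by simp
qed

end
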